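(* Let $\mathbf{P_0},\mathbf{P_1}$ be $n\times n$ transition probability matrices of irreducible and aperiodic Markov chains on $n$ states, let $\mathbf{P_t}=(1-t)\mathbf{P_0}+t\mathbf{P_1}$ for $t\in[0,1]$, and let $\pi_t$ be the stationary distribution of $\mathbf{P_t}$. Let $T\in\mathbb{N}$. Then for every integer $1\le k\le T$, $$\|\pi_0\mathbf{P_{1/T}}\mathbf{P_{2/T}}\cdots\mathbf{P_{k/T}}-\pi_{k/T}\|_{TV}\le\|\pi_{k/T}-\pi_0\|_{TV}+\frac{(k+1)^2}{2T}.$$
   Context: Distributions are row vectors; $\|\mu-\nu\|_{TV}=\frac12\|\mu-\nu\|_1$. *)

theory Defs
  imports "HOL-Analysis.Analysis"
begin

text \<open>Row-stochastic matrices over a finite state type 'n; distributions are row vectors.\<close>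

definition stochastic_matrix :: "real^'n^'n \<Rightarrow> bool" where
  "stochastic_matrix P \<longleftrightarrow> (\<forall>i j. P $ i $ j \<ge> 0) \<and> (\<forall>i. (\<Sum>j\<in>UNIV. P $ i $ j) = 1)"

primrec matpow :: "real^'n^'n \<Rightarrow> nat \<Rightarrow> real^'n^'n" where
  "matpow P 0 = mat 1"
| "matpow P (Suc m) = matpow P m ** P"

definition irreducible_chain :: "real^'n^'n \<Rightarrow> bool" where
  "irreducible_chain P \<longleftrightarrow> (\<forall>i j. \<exists>m. matpow P m $ i $ j > 0)"

definition aperiodic_chain :: "real^'n^'n \<Rightarrow> bool" where
  "aperiodic_chain P \<longleftrightarrow> (\<forall>i. Gcd {m::nat. m > 0 \<and> matpow P m $ i $ i > 0} = 1)"

definition prob_vector :: "real^'n \<Rightarrow> bool" where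
  "prob_vector \<mu> \<longleftrightarrow> (\<forall>i. \<mu> $ i \<ge> 0) \<and> (\<Sum>i\<in>UNIV. \<mu> $ i) = 1"

definition stationary_dist :: "real^'n^'n \<Rightarrow> real^'n \<Rightarrow> bool" where
  "stationary_dist P \<pi> \<longleftrightarrow> prob_vector \<pi> \<and> \<pi> v* P = \<pi>"

definition tv_dist :: "real^'n \<Rightarrow> real^'n \<Rightarrow> real" where
  "tv_dist \<mu> \<nu> = (1/2) * (\<Sum>i\<in>UNIV. \<bar>\<mu> $ i - \<nu> $ i\<bar>)"

end

theory Submission
  imports Defs
begin

definition l1 :: "real^'n \<Rightarrow> real" where "l1 x = (\<Sum>i\<in>UNIV. \<bar>x $ i\<bar>)"

lemma l1_triangle: "l1 (x + y) \<le> l1 x + l1 y"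
  unfolding l1_def by (simp add: sum.distrib[symmetric] sum_mono abs_triangle_ineq)

lemma l1_scale: "l1 (c *\<^sub>R x) = \<bar>c\<bar> * l1 x"
  unfolding l1_def by (simp add: abs_mult sum_distrib_left)

lemma l1_minus_commute: "l1 (x - y) = l1 (y - x)"
  unfolding l1_def by (simp add: abs_minus_commute)

lemma vm_diff: "(x - y) v* P = x v* P - y v* (P::real^'m^'n)"
  unfolding vector_matrix_mult_def vec_eq_iff by (simp add: left_diff_distrib sum_subtractf[symmetric] del: sum_subtractf)

lemma vm_comb: "x v* (a *\<^sub>R A + b *\<^sub>R B) = a *\<^sub>R (x v* A) + b *\<^sub>R (x v* (B::real^'m^'n))"
  by (simp add: vec_eq_iff vector_matrix_mult_def real_scaleR_def distrib_left sum.distrib sum_distrib_left mult.left_commute)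

lemma l1_contract:
  assumes "stochastic_matrix P"
  shows "l1 (x v* P) \<le> l1 x"
proof -
  have "l1 (x v* P) = (\<Sum>j\<in>UNIV. \<bar>\<Sum>i\<in>UNIV. P$i$j * x$i\<bar>)"
    by (simp add: l1_def vector_matrix_mult_def mult.commute)
  also have "\<dots> \<le> (\<Sum>j\<in>UNIV. \<Sum>i\<in>UNIV. P$i$j * \<bar>x$i\<bar>)"
    apply (rule sum_mono)
    apply (rule order_trans[OF sum_abs])
    using assms by (simp add: stochastic_matrix_def abs_mult)
  also have "\<dots> = (\<Sum>i\<in>UNIV. \<bar>x$i\<bar> * (\<Sum>j\<in>UNIV. P$i$j))"
    by (subst sum.swap) (simp add: sum_distrib_left mult.commute)
  also have "\<dots> = l1 x" using assms by (simp add: stochastic_matrix_def l1_def)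
  finally show ?thesis .
qed

lemma stoch_comb:
  assumes "stochastic_matrix A" "stochastic_matrix B" "0 \<le> t" "t \<le> 1"
  shows "stochastic_matrix ((1 - t) *\<^sub>R A + t *\<^sub>R B)"
  using assms unfolding stochastic_matrix_def
  by (simp add: sum.distrib sum_distrib_left[symmetric])

theorem proposition3:
  fixes P0 P1 :: "real^'n^'n" and \<pi> :: "real \<Rightarrow> real^'n" and T k :: nat
  assumes "stochastic_matrix P0" "irreducible_chain P0" "aperiodic_chain P0"
    and "stochastic_matrix P1" "irreducible_chain P1" "aperiodic_chain P1"
    and "\<And>t. t \<in> {0..1} \<Longrightarrow> stationary_dist ((1 - t) *\<^sub>R P0 + t *\<^sub>R P1) (\<pi> t)"
    and "1 \<le> k" "k \<le> T"
  shows "tv_dist (foldl (\<lambda>v j. v v* ((1 - real j / real T) *\<^sub>R P0 + (real j / real T) *\<^sub>R P1))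
                    (\<pi> 0) [1..<k+1])
                 (\<pi> (real k / real T))
         \<le> tv_dist (\<pi> (real k / real T)) (\<pi> 0) + (real k + 1)^2 / (2 * real T)"
proof -
  define Q where "Q j = (1 - real j / real T) *\<^sub>R P0 + (real j / real T) *\<^sub>R P1" for j :: nat
  define f where "f = (\<lambda>v j. v v* Q j)"
  have T: "real T > 0" using assms(8,9) by simp
  have st0: "stationary_dist P0 (\<pi> 0)" using assms(7)[of 0] by simp
  hence pi0: "\<pi> 0 v* P0 = \<pi> 0" and pv: "prob_vector (\<pi> 0)" by (auto simp: stationary_dist_def)
  have l1pi: "l1 (\<pi> 0) = 1" using pv by (simp add: prob_vector_def l1_def)
  have stQ: "stochastic_matrix (Q j)" if "j \<le> T" for j
    unfolding Q_def using that T by (intro stoch_comb assms(1,4)) auto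
  have drift: "l1 (\<pi> 0 v* Q j - \<pi> 0) \<le> 2 * real j / real T" for j
  proof -
    have "\<pi> 0 v* Q j - \<pi> 0 = (real j / real T) *\<^sub>R (\<pi> 0 v* P1 - \<pi> 0)"
      unfolding Q_def vm_comb pi0 by (simp add: algebra_simps)
    hence "l1 (\<pi> 0 v* Q j - \<pi> 0) = (real j / real T) * l1 (\<pi> 0 v* P1 - \<pi> 0)"
      by (simp add: l1_scale)
    moreover have "l1 (\<pi> 0 v* P1 - \<pi> 0) \<le> 2"
      using l1_triangle[of "\<pi> 0 v* P1" "- \<pi> 0"] l1_contract[OF assms(4), of "\<pi> 0"]
        l1_scale[of "-1" "\<pi> 0"] l1pi by simp
    moreover have "0 \<le> real j / real T" using T by simp
    ultimately have "l1 (\<pi> 0 v* Q j - \<pi> 0) \<le> (real j / real T) * 2"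
      by (metis mult_left_mono)
    thus ?thesis by (simp add: mult.commute)
  qed
  have main: "m \<le> T \<Longrightarrow> l1 (foldl f (\<pi> 0) [1..<m+1] - \<pi> 0) \<le> real (m * (m+1)) / real T" for m
  proof (induction m)
    case 0 then show ?case by (simp add: l1_def)
  next
    case (Suc m)
    let ?u = "foldl f (\<pi> 0) [1..<m+1]"
    have eq: "foldl f (\<pi> 0) [1..<Suc m+1] = ?u v* Q (Suc m)"
      by (simp add: f_def)
    have "?u v* Q (Suc m) - \<pi> 0 = (?u - \<pi> 0) v* Q (Suc m) + (\<pi> 0 v* Q (Suc m) - \<pi> 0)"
      by (simp add: vm_diff)
    hence "l1 (?u v* Q (Suc m) - \<pi> 0) \<le> l1 ((?u - \<pi> 0) v* Q (Suc m)) + l1 (\<pi> 0 v* Q (Suc m) - \<pi> 0)"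
      using l1_triangle by metis
    also have "\<dots> \<le> l1 (?u - \<pi> 0) + 2 * real (Suc m) / real T"
      by (rule add_mono[OF l1_contract[OF stQ[OF Suc.prems]] drift])
    also have "\<dots> \<le> real (m * (m+1)) / real T + 2 * real (Suc m) / real T"
      using Suc by simp
    also have "\<dots> = real (Suc m * (Suc m + 1)) / real T"
      by (simp add: add_divide_distrib[symmetric] algebra_simps)
    finally show ?case using eq by simp
  qed
  have M: "l1 (foldl f (\<pi> 0) [1..<k+1] - \<pi> 0) \<le> (real k + 1)^2 / real T"
  proof -
    have "real (k * (k+1)) \<le> (real k + 1)^2" by (simp add: power2_eq_square algebra_simps)
    hence "real (k * (k+1)) / real T \<le> (real k + 1)^2 / real T" using T by (simp add: divide_right_mono)
    thus ?thesis using main[OF assms(9)] by linarith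
  qed
  let ?u = "foldl f (\<pi> 0) [1..<k+1]" and ?p = "\<pi> (real k / real T)"
  have "l1 (?u - ?p) \<le> l1 (?u - \<pi> 0) + l1 (\<pi> 0 - ?p)"
    using l1_triangle[of "?u - \<pi> 0" "\<pi> 0 - ?p"] by simp
  hence "l1 (?u - ?p) \<le> (real k + 1)^2 / real T + l1 (?p - \<pi> 0)"
    using M l1_minus_commute[of "\<pi> 0" ?p] by linarith
  moreover have tv: "tv_dist a b = l1 (a - b) / 2" for a b :: "real^'n"
    by (simp add: tv_dist_def l1_def)
  ultimately have "tv_dist ?u ?p \<le> tv_dist ?p (\<pi> 0) + (real k + 1)^2 / (2 * real T)"
    unfolding tv by simp
  moreover have "?u = foldl (\<lambda>v j. v v* ((1 - real j / real T) *\<^sub>R P0 + (real j / real T) *\<^sub>R P1))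
                    (\<pi> 0) [1..<k+1]" unfolding f_def Q_def by simp
  ultimately show ?thesis by simp
qed

end
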